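(* Let either $1<d\leq2$ and $0<\beta\leq\frac{d-1}2$, or $d>2$ and $\frac{d-2}2\leq\beta\leq\frac{d-1}2$, and let $\theta=\frac{d-2\beta}2$. Then for all $u\in H^1(\mathbb{R}_+,(1+t)^{d-1})$ \[ \sup_{t\geq0}|u(t)|^2(1+t)^{2\beta}\leq K\left(\int_0^\infty|u'|^2(1+t)^{d-1}dt\right)^\theta\left(\int_0^\infty|u|^2(1+t)^{d-1}dt\right)^{1-\theta} \] with \[ K=\left(\frac2{d-2\beta}\right)^{d-2\beta}\left(\frac{d-1-2\beta}{2\beta}\right)^{d-1-2\beta}, \] using the convention $0^0=1$ (so $K=2$ when $\beta=\frac{d-1}2$).
   Context: $H^1(\mathbb{R}_+,(1+t)^{d-1})$ is the space of $u\in H^1_{\mathrm{loc}}(\mathbb{R}_+)$ with $\int_0^\infty(|u'|^2+|u|^2)(1+t)^{d-1}dt<\infty$. *)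

theory Defs
  imports "HOL-Analysis.Analysis"
begin

text \<open>Real power with the convention 0^0 = 1 (Isabelle's powr has 0 powr 0 = 0).\<close>
definition powr0 :: "real \<Rightarrow> real \<Rightarrow> real" where
  "powr0 x y = (if y = 0 then 1 else x powr y)"

end

theory Submission
  imports Defs
begin


lemma telescope_le:
  fixes F M :: "real \<Rightarrow> real"
  assumes ab: "a \<le> b"
    and loc: "\<And>e. e > 0 \<Longrightarrow> \<exists>\<delta>>0. \<forall>x y. a \<le> x \<longrightarrow> x \<le> y \<longrightarrow> y \<le> b \<longrightarrow> y - x < \<delta>
                 \<longrightarrow> F x - F y \<le> M y - M x + e * (y - x)"
  shows "F a - F b \<le> M b - M a"
proof (rule field_le_epsilon)
  fix e :: real assume e: "e > 0"
  define e' where "e' = e / (b - a + 1)"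
  have e': "e' > 0" using e ab by (simp add: e'_def)
  obtain \<delta> where \<delta>: "\<delta> > 0" and L: "\<And>x y. a \<le> x \<Longrightarrow> x \<le> y \<Longrightarrow> y \<le> b \<Longrightarrow> y - x < \<delta>
                 \<Longrightarrow> F x - F y \<le> M y - M x + e' * (y - x)"
    using loc[OF e'] by blast
  obtain n :: nat where n: "(b - a) / \<delta> < real n" using reals_Archimedean2 by blast
  have npos: "real n > 0" using n ab \<delta> by (smt (verit) divide_nonneg_pos)
  define x where "x i = a + real i * (b - a) / real n" for i :: nat
  have step: "(b - a) / real n < \<delta>" using n npos \<delta> by (simp add: divide_less_eq mult.commute pos_divide_less_eq)
  have "\<forall>i<n. F (x i) - F (x (Suc i)) \<le> (M (x (Suc i)) - M (x i)) + e' * ((b - a) / real n)"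
  proof (intro allI impI)
    fix i assume i: "i < n"
    have xs: "x (Suc i) - x i = (b - a) / real n" unfolding x_def using npos by (simp add: field_simps)
    have "a \<le> x i" unfolding x_def using ab npos by simp
    moreover have "x i \<le> x (Suc i)" using xs ab npos by (smt (verit) divide_nonneg_pos)
    moreover have "x (Suc i) \<le> b"
    proof -
      have "real (Suc i) * (b - a) / real n \<le> real n * (b - a) / real n"
        using i ab npos by (intro divide_right_mono mult_right_mono) auto
      then show ?thesis unfolding x_def using npos by simp
    qed
    ultimately show "F (x i) - F (x (Suc i)) \<le> (M (x (Suc i)) - M (x i)) + e' * ((b - a) / real n)"
      using L[of "x i" "x (Suc i)"] xs step by simp
  qed
  then have "(\<Sum>i<n. F (x i) - F (x (Suc i))) \<le> (\<Sum>i<n. (M (x (Suc i)) - M (x i)) + e' * ((b - a) / real n))"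
    by (intro sum_mono) auto
  also have "\<dots> = M (x n) - M (x 0) + e' * (b - a)"
    using npos sum_lessThan_telescope[of "\<lambda>i. M (x i)" n] by (simp add: sum.distrib)
  finally have "F (x 0) - F (x n) \<le> M (x n) - M (x 0) + e' * (b - a)"
    using sum_lessThan_telescope'[of "\<lambda>i. F (x i)" n] by simp
  moreover have "x 0 = a" "x n = b" using npos unfolding x_def by auto
  moreover have "e' * (b - a) \<le> e" unfolding e'_def using e ab
    by (simp add: field_simps)
  ultimately show "F a - F b \<le> M b - M a + e" by simp
qed


lemma const_ineq:
  fixes a \<beta> z :: real
  assumes b: "\<beta> > 0" and a1: "1 \<le> a" and a2: "a \<le> 2" and z: "z > 0"
  shows "z powr (2*(a-1)) \<le> (a/2) * (powr0 (2/a) a * powr0 ((a-1)/(2*\<beta>)) (a-1))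
            * ((1 - a/2) * (powr0 (2/a) a * powr0 ((a-1)/(2*\<beta>)) (a-1)) + 2*\<beta> * z powr a)"
proof -
  define K where "K = powr0 (2/a) a * powr0 ((a-1)/(2*\<beta>)) (a-1)"
  consider "a = 1" | "a = 2" | "1 < a \<and> a < 2" using a1 a2 by linarith
  then have "z powr (2*(a-1)) \<le> (a/2) * K * ((1 - a/2) * K + 2*\<beta> * z powr a)"
  proof cases
    case 1
    then have K: "K = 2" unfolding K_def powr0_def by simp
    have "0 \<le> 2*\<beta> * z powr a" using b z by simp
    then show ?thesis using 1 K by simp
  next
    case 2
    then have K: "K = 1/(2*\<beta>)" unfolding K_def powr0_def using b by simp
    have "z powr 2 = z powr a * (2*\<beta>) * (1/(2*\<beta>))" using b 2 by simp
    then show ?thesis using 2 K by (simp add: field_simps)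
  next
    case 3
    define p where "p = 2*(a-1)/a"
    have p0: "0 < p" "p < 1" using 3 unfolding p_def by (auto simp: field_simps)
    have Kpos: "K > 0" unfolding K_def powr0_def using 3 b by auto
    define X where "X = 2*\<beta>*(a/2)*K * z powr a / p"
    define Y where "Y = (a/2)*(1-a/2)*K^2/(1-p)"
    have Xp: "X > 0" unfolding X_def using b 3 Kpos p0 z by auto
    have Yp: "Y > 0" unfolding Y_def using 3 Kpos p0 by auto
    have young: "X powr p * Y powr (1-p) \<le> p*X + (1-p)*Y"
      using Youngs_inequality_0[of p "1-p" X Y] p0 Xp Yp by simp
    have rhs: "p*X + (1-p)*Y = (a/2) * K * ((1 - a/2) * K + 2*\<beta> * z powr a)"
      unfolding X_def Y_def using p0 by (simp add: field_simps power2_eq_square)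
    define C where "C = (2*\<beta>*(a/2)*K/p) powr p * ((a/2)*(1-a/2)*K^2/(1-p)) powr (1-p)"
    have XY: "X powr p * Y powr (1-p) = C * z powr (2*(a-1))"
    proof -
      have "X powr p = (2*\<beta>*(a/2)*K/p) powr p * (z powr a) powr p"
        unfolding X_def using b 3 Kpos p0 z by (simp add: powr_mult[symmetric])
      moreover have "(z powr a) powr p = z powr (2*(a-1))"
        using 3 by (simp add: powr_powr p_def)
      ultimately show ?thesis unfolding C_def Y_def by simp
    qed
    have C1: "C = 1"
    proof -
      have lnK: "ln K = a * ln (2/a) + (a-1) * ln ((a-1)/(2*\<beta>))"
        unfolding K_def powr0_def using 3 b by (simp add: ln_mult ln_powr)
      have Cpos: "C > 0" unfolding C_def using b 3 Kpos p0 by simp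
      have "ln C = p * ln (2*\<beta>*(a/2)*K/p) + (1-p) * ln ((a/2)*(1-a/2)*K^2/(1-p))"
        unfolding C_def using b 3 Kpos p0 by (simp add: ln_mult ln_powr)
      also have "\<dots> = 0"
      proof -
        have e1: "2*\<beta>*(a/2)*K/p = (\<beta>*a*a/(2*(a-1))) * K" unfolding p_def using 3 by (simp add: field_simps)
        have e2: "(a/2)*(1-a/2)*K^2/(1-p) = (a/2)*(a/2)*K*K" unfolding p_def using 3 by (simp add: field_simps power2_eq_square)
        have h: "ln (2*a-2) = ln 2 + ln (a-1)" using ln_mult[of 2 "a-1"] 3 by (simp add: algebra_simps)
        have l1: "ln ((\<beta>*a*a/(2*(a-1))) * K) = ln \<beta> + 2 * ln a - ln 2 - ln (a-1) + ln K"
          using b 3 Kpos h by (simp add: ln_mult ln_div)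
        have h4: "ln (4::real) = 2 * ln 2" using ln_mult[of 2 2] by simp
        have l2: "ln ((a/2)*(a/2)*K*K) = 2 * ln a - 2 * ln 2 + 2 * ln K"
          using b 3 Kpos h4 by (simp add: ln_mult ln_div)
        have l3: "ln K = a * (ln 2 - ln a) + (a-1) * (ln (a-1) - ln 2 - ln \<beta>)"
          using lnK b 3 by (simp add: ln_mult ln_div)
        have "p * ln (2*\<beta>*(a/2)*K/p) + (1-p) * ln ((a/2)*(1-a/2)*K^2/(1-p))
           = p * (ln \<beta> + 2 * ln a - ln 2 - ln (a-1) + ln K) + (1-p) * (2 * ln a - 2 * ln 2 + 2 * ln K)"
          by (simp only: e1 e2 l1 l2)
        also have "\<dots> = 0" unfolding l3 p_def using 3 by (simp add: field_simps)
        finally show ?thesis .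
      qed
      finally show ?thesis using Cpos by simp
    qed
    show ?thesis using young rhs XY C1 by simp
  qed
  then show ?thesis unfolding K_def .
qed


lemma amgm_aux:
  fixes W c v :: real
  assumes W: "W > 0"
  shows "c * v \<le> W * v\<^sup>2 + c\<^sup>2 / (4 * W)"
proof -
  have "0 \<le> (2 * W * v - c)\<^sup>2" by simp
  then have "4 * W * (c * v) \<le> 4 * W * (W * v\<^sup>2 + c\<^sup>2 / (4 * W))"
    using W by (simp add: power2_eq_square algebra_simps)
  then show ?thesis using W by simp
qed

lemma local_est:
  fixes u u' :: "real \<Rightarrow> complex" and g g' w :: "real \<Rightarrow> real"
  assumes xy: "x \<le> y"
    and uint: "(u' has_integral (u y - u x)) {x..y}"
    and gint: "(g' has_integral (g y - g x)) {x..y}"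
    and g'c: "continuous_on {x..y} g'"
    and wc: "continuous_on {x..y} w"
    and wpos: "\<And>s. s \<in> {x..y} \<Longrightarrow> w s > 0"
    and uc: "continuous_on {x..y} u"
    and pu: "(\<lambda>s. (norm (u' s))\<^sup>2 * w s) integrable_on {x..y}"
    and e: "\<epsilon> > 0"
    and gx: "g x \<ge> 0"
  shows "(norm (u x))\<^sup>2 * g x - (norm (u y))\<^sup>2 * g y
     \<le> integral {x..y} (\<lambda>s. \<epsilon> * ((norm (u' s))\<^sup>2 * w s) + \<mu> * ((norm (u s))\<^sup>2 * w s))
      + integral {x..y} (\<lambda>s. ((norm (u x) + norm (u y)) * g x)\<^sup>2 / (4 * \<epsilon> * w s)
                 - (norm (u y))\<^sup>2 * g' s - \<mu> * ((norm (u s))\<^sup>2 * w s))"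
proof -
  define c where "c = (norm (u x) + norm (u y)) * g x"
  have c0: "c \<ge> 0" unfolding c_def using gx by simp
  define h where "h s = \<epsilon> * ((norm (u' s))\<^sup>2 * w s) + c\<^sup>2 / (4 * \<epsilon> * w s)" for s
  have invw: "continuous_on {x..y} (\<lambda>s. c\<^sup>2 / (4 * \<epsilon> * w s))"
    using wc wpos e by (intro continuous_intros) force+
  have invw_int: "(\<lambda>s. c\<^sup>2 / (4 * \<epsilon> * w s)) integrable_on {x..y}"
    using invw by (rule integrable_continuous_interval)
  have pu': "(\<lambda>s. \<epsilon> * ((norm (u' s))\<^sup>2 * w s)) integrable_on {x..y}"
    using pu by (rule integrable_on_mult_right)
  have hint: "h integrable_on {x..y}" unfolding h_def using pu' invw_int by (rule integrable_add)
  have T1: "((norm (u x))\<^sup>2 - (norm (u y))\<^sup>2) * g x \<le> c * norm (u y - u x)"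
  proof -
    have "(norm (u x))\<^sup>2 - (norm (u y))\<^sup>2 = (norm (u x) - norm (u y)) * (norm (u x) + norm (u y))"
      by (simp add: power2_eq_square algebra_simps)
    also have "\<dots> \<le> norm (u y - u x) * (norm (u x) + norm (u y))"
      by (intro mult_right_mono) (auto simp: norm_minus_commute norm_triangle_ineq2)
    finally have "(norm (u x))\<^sup>2 - (norm (u y))\<^sup>2 \<le> norm (u y - u x) * (norm (u x) + norm (u y))" .
    then have "((norm (u x))\<^sup>2 - (norm (u y))\<^sup>2) * g x \<le> (norm (u y - u x) * (norm (u x) + norm (u y))) * g x"
      by (rule mult_right_mono[OF _ gx])
    also have "\<dots> = c * norm (u y - u x)" unfolding c_def by (simp add: algebra_simps)
    finally show ?thesis .
  qed
  have T2: "c * norm (u y - u x) \<le> integral {x..y} h"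
  proof -
    have "((\<lambda>s. complex_of_real c * u' s) has_integral (complex_of_real c * (u y - u x))) {x..y}"
      using uint by (rule has_integral_mult_right)
    then have eq: "integral {x..y} (\<lambda>s. complex_of_real c * u' s) = complex_of_real c * (u y - u x)"
      and ii: "(\<lambda>s. complex_of_real c * u' s) integrable_on {x..y}"
      by (blast intro: integral_unique, blast)
    have nb: "norm (integral {x..y} (\<lambda>s. complex_of_real c * u' s)) \<le> integral {x..y} h"
    proof (rule integral_norm_bound_integral[OF ii hint])
      fix s assume s: "s \<in> {x..y}"
      have W: "\<epsilon> * w s > 0" using e wpos[OF s] by simp
      have "c * norm (u' s) \<le> (\<epsilon> * w s) * (norm (u' s))\<^sup>2 + c\<^sup>2 / (4 * (\<epsilon> * w s))"
        using amgm_aux[OF W] .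
      then show "norm (complex_of_real c * u' s) \<le> h s"
        unfolding h_def using c0 by (simp add: norm_mult algebra_simps)
    qed
    have "norm (integral {x..y} (\<lambda>s. complex_of_real c * u' s)) = c * norm (u y - u x)"
      unfolding eq using c0 by (simp add: norm_mult)
    then show ?thesis using nb by linarith
  qed
  have T3: "g x - g y = - integral {x..y} g'" using gint by (simp add: integral_unique)
  have g'int: "g' integrable_on {x..y}" using gint by blast
  have "(norm (u x))\<^sup>2 * g x - (norm (u y))\<^sup>2 * g y
      = ((norm (u x))\<^sup>2 - (norm (u y))\<^sup>2) * g x + (norm (u y))\<^sup>2 * (g x - g y)"
    by (simp add: algebra_simps)
  also have "\<dots> \<le> integral {x..y} h - (norm (u y))\<^sup>2 * integral {x..y} g'"
    using T1 T2 T3 by simp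
  also have "\<dots> = integral {x..y} (\<lambda>s. h s - (norm (u y))\<^sup>2 * g' s)"
    using hint g'int by (simp add: integral_diff integrable_on_mult_right integral_mult_right)
  also have "\<dots> = integral {x..y} (\<lambda>s. \<epsilon> * ((norm (u' s))\<^sup>2 * w s) + \<mu> * ((norm (u s))\<^sup>2 * w s))
      + integral {x..y} (\<lambda>s. c\<^sup>2 / (4 * \<epsilon> * w s)
                 - (norm (u y))\<^sup>2 * g' s - \<mu> * ((norm (u s))\<^sup>2 * w s))"
  proof -
    have mc: "continuous_on {x..y} (\<lambda>s. \<mu> * ((norm (u s))\<^sup>2 * w s))"
      using uc wc by (intro continuous_intros) auto
    have kc: "continuous_on {x..y} (\<lambda>s. c\<^sup>2 / (4 * \<epsilon> * w s)
                 - (norm (u y))\<^sup>2 * g' s - \<mu> * ((norm (u s))\<^sup>2 * w s))"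
      by (intro continuous_on_diff invw mc continuous_on_mult continuous_on_const g'c)
    have mi: "(\<lambda>s. \<epsilon> * ((norm (u' s))\<^sup>2 * w s) + \<mu> * ((norm (u s))\<^sup>2 * w s)) integrable_on {x..y}"
      using pu' integrable_continuous_interval[OF mc] by (rule integrable_add)
    have ki: "(\<lambda>s. c\<^sup>2 / (4 * \<epsilon> * w s)
                 - (norm (u y))\<^sup>2 * g' s - \<mu> * ((norm (u s))\<^sup>2 * w s)) integrable_on {x..y}"
      using integrable_continuous_interval[OF kc] .
    show ?thesis
      by (subst integral_add[OF mi ki, symmetric]) (simp add: h_def algebra_simps)
  qed
  finally show ?thesis unfolding c_def .
qed
lemma main_bound:
  fixes d \<beta> \<epsilon> \<mu> t :: real and u u' :: "real \<Rightarrow> complex"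
  assumes bpos: "\<beta> > 0" and bd: "2 * \<beta> \<le> d - 1"
    and H1loc: "\<And>t. 0 \<le> t \<Longrightarrow> (u' has_integral (u t - u 0)) {0..t}"
    and du: "(\<lambda>t. (norm (u' t))\<^sup>2 * (1 + t) powr (d - 1)) integrable_on {0..}"
    and uu: "(\<lambda>t. (norm (u t))\<^sup>2 * (1 + t) powr (d - 1)) integrable_on {0..}"
    and e: "\<epsilon> > 0" and m: "\<mu> \<ge> 0"
    and cond: "\<And>s. 0 \<le> s \<Longrightarrow> ((1 + s) powr (2 * \<beta>))\<^sup>2
        \<le> \<epsilon> * (1 + s) powr (d - 1) * (\<mu> * (1 + s) powr (d - 1) + 2 * \<beta> * (1 + s) powr (2 * \<beta> - 1))"
    and t: "0 \<le> t"
  shows "(norm (u t))\<^sup>2 * (1 + t) powr (2 * \<beta>)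
     \<le> \<epsilon> * integral {0..} (\<lambda>t. (norm (u' t))\<^sup>2 * (1 + t) powr (d - 1))
       + \<mu> * integral {0..} (\<lambda>t. (norm (u t))\<^sup>2 * (1 + t) powr (d - 1))"
proof -
  define w where "w = (\<lambda>s::real. (1 + s) powr (d - 1))"
  define g where "g = (\<lambda>s::real. (1 + s) powr (2 * \<beta>))"
  define g' where "g' = (\<lambda>s::real. 2 * \<beta> * (1 + s) powr (2 * \<beta> - 1))"
  define f1 where "f1 = (\<lambda>s. (norm (u' s))\<^sup>2 * w s)"
  define f2 where "f2 = (\<lambda>s. (norm (u s))\<^sup>2 * w s)"
  define A where "A = integral {0..} f1"
  define B where "B = integral {0..} f2"
  define F where "F s = (norm (u s))\<^sup>2 * g s" for s
  define mm where "mm s = \<epsilon> * f1 s + \<mu> * f2 s" for s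
  have f1i: "f1 integrable_on {0..}" using du unfolding f1_def w_def .
  have f2i: "f2 integrable_on {0..}" using uu unfolding f2_def w_def .
  have mmi: "mm integrable_on {0..}" unfolding mm_def
    using integrable_on_mult_right[OF f1i] integrable_on_mult_right[OF f2i] by (rule integrable_add)
  have sub: "\<And>(h::real \<Rightarrow> real) x y. h integrable_on {0..} \<Longrightarrow> 0 \<le> x \<Longrightarrow> h integrable_on {x..y}"
  proof -
    fix h :: "real \<Rightarrow> real" and x y :: real
    assume h: "h integrable_on {0..}" and x: "0 \<le> x"
    have "cbox x y \<subseteq> {0..}" using x by auto
    from integrable_on_subcbox[OF h this] show "h integrable_on {x..y}" by simp
  qed
  have wpos: "\<And>s. 0 \<le> s \<Longrightarrow> w s \<ge> 1" unfolding w_def using bd bpos by (simp add: ge_one_powr_ge_zero)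
  have gw: "\<And>s. 0 \<le> s \<Longrightarrow> g s \<le> w s" unfolding w_def g_def using bd by (intro powr_mono) auto
  have g0: "\<And>s. 0 \<le> s \<Longrightarrow> g s \<ge> 0" unfolding g_def by simp
  have f1nn: "\<And>s. f1 s \<ge> 0" unfolding f1_def w_def by simp
  have f2nn: "\<And>s. f2 s \<ge> 0" unfolding f2_def w_def by simp
  have uxy: "\<And>x y. 0 \<le> x \<Longrightarrow> x \<le> y \<Longrightarrow> (u' has_integral (u y - u x)) {x..y}"
  proof -
    fix x y :: real assume x: "0 \<le> x" and xy: "x \<le> y"
    have y0: "0 \<le> y" using x xy by simp
    have iy: "u' integrable_on {0..y}" using H1loc[OF y0] by blast
    have "integral {0..x} u' + integral {x..y} u' = integral {0..y} u'"
      using Henstock_Kurzweil_Integration.integral_combine[OF x xy iy] .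
    moreover have "integral {0..x} u' = u x - u 0" using H1loc[OF x] by (rule integral_unique)
    moreover have "integral {0..y} u' = u y - u 0" using H1loc[OF y0] by (rule integral_unique)
    moreover have ixy: "u' integrable_on {x..y}" by (rule integrable_subinterval_real[OF iy]) (use x in auto)
    ultimately have "integral {x..y} u' = u y - u x"
      by (metis add_diff_cancel_left' diff_diff_eq2)
    then show "(u' has_integral (u y - u x)) {x..y}" using integrable_integral[OF ixy] by simp
  qed
  have ucont: "\<And>T. continuous_on {0..T} u"
  proof -
    fix T :: real
    show "continuous_on {0..T} u"
    proof (cases "0 \<le> T")
      case False then show ?thesis by simp
    next
      case True
      have iT: "u' integrable_on {0..T}" using H1loc[OF True] by blast
      have "continuous_on {0..T} (\<lambda>s. u 0 + integral {0..s} u')"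
        using indefinite_integral_continuous_1[OF iT] by (intro continuous_intros)
      moreover have "\<And>s. s \<in> {0..T} \<Longrightarrow> u 0 + integral {0..s} u' = u s"
      proof -
        fix s assume "s \<in> {0..T}"
        then have "integral {0..s} u' = u s - u 0" by (intro integral_unique H1loc) auto
        then show "u 0 + integral {0..s} u' = u s" by simp
      qed
      ultimately show ?thesis by (rule continuous_on_eq) 
    qed
  qed
  have gder: "\<And>x y. 0 \<le> x \<Longrightarrow> x \<le> y \<Longrightarrow> (g' has_integral (g y - g x)) {x..y}"
  proof -
    fix x y :: real assume x: "0 \<le> x" and xy: "x \<le> y"
    show "(g' has_integral (g y - g x)) {x..y}"
    proof (rule fundamental_theorem_of_calculus[OF xy])
      fix s assume s: "s \<in> {x..y}"
      have dd: "((\<lambda>s. 1 + s) has_real_derivative 1) (at s)"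
        by (auto intro!: derivative_eq_intros)
      have "((\<lambda>s. (1 + s) powr (2 * \<beta>)) has_real_derivative (2 * \<beta> * (1 + s) powr (2 * \<beta> - 1) * 1)) (at s)"
        using DERIV_fun_powr[OF dd, of "2 * \<beta>"] s x by simp
      then have "(g has_real_derivative g' s) (at s within {x..y})"
        unfolding g_def g'_def by (simp add: has_field_derivative_at_within)
      then show "(g has_vector_derivative g' s) (at s within {x..y})"
        by (simp add: has_real_derivative_iff_has_vector_derivative)
    qed
  qed
  have wcont: "\<And>x y. 0 \<le> x \<Longrightarrow> continuous_on {x..y} w"
    unfolding w_def by (intro continuous_intros) auto
  have gcont: "\<And>x y. 0 \<le> x \<Longrightarrow> continuous_on {x..y} g"
    unfolding g_def by (intro continuous_intros) auto
  have g'cont: "\<And>x y. 0 \<le> x \<Longrightarrow> continuous_on {x..y} g'"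
    unfolding g'_def by (intro continuous_intros) auto
  have ucont': "\<And>x y. 0 \<le> x \<Longrightarrow> continuous_on {x..y} u"
    using ucont by (rule continuous_on_subset) auto
  define Mf where "Mf s = integral {t..s} mm" for s
  have keyT: "F t - F T \<le> integral {t..T} mm" if tT: "t \<le> T" for T
  proof -
    have "F t - F T \<le> Mf T - Mf t"
    proof (rule telescope_le[OF tT])
      fix e :: real assume epos: "e > 0"
      have ucT: "continuous_on {t..T} u" using ucont' t by blast
      have phic: "continuous_on {t..T} (\<lambda>s. norm (u s))" using ucT by (intro continuous_intros)
      have gc: "continuous_on {t..T} g" using gcont t by blast
      have g'c: "continuous_on {t..T} g'" using g'cont t by blast
      obtain B1 where B1: "\<And>s. s \<in> {t..T} \<Longrightarrow> norm (norm (u s)) \<le> B1"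
        using compact_imp_bounded[OF compact_continuous_image[OF phic compact_Icc]] unfolding bounded_iff by blast
      obtain B2 where B2: "\<And>s. s \<in> {t..T} \<Longrightarrow> norm (g s) \<le> B2"
        using compact_imp_bounded[OF compact_continuous_image[OF gc compact_Icc]] unfolding bounded_iff by blast
      obtain B3 where B3: "\<And>s. s \<in> {t..T} \<Longrightarrow> norm (g' s) \<le> B3"
        using compact_imp_bounded[OF compact_continuous_image[OF g'c compact_Icc]] unfolding bounded_iff by blast
      define Bd where "Bd = max 1 (max B1 (max B2 B3))"
      have Bd1: "Bd \<ge> 1" unfolding Bd_def by simp
      have phiB: "\<And>s. s \<in> {t..T} \<Longrightarrow> norm (u s) \<le> Bd" using B1 unfolding Bd_def by force
      have gB: "\<And>s. s \<in> {t..T} \<Longrightarrow> \<bar>g s\<bar> \<le> Bd" using B2 unfolding Bd_def by force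
      have g'B: "\<And>s. s \<in> {t..T} \<Longrightarrow> \<bar>g' s\<bar> \<le> Bd" using B3 unfolding Bd_def by force
      define C0 where "C0 = 4 * Bd^3 / \<epsilon> + 2 * Bd^2"
      have C0: "C0 \<ge> 0" unfolding C0_def using Bd1 e by simp
      define \<eta> where "\<eta> = e / (C0 + 1)"
      have eta: "\<eta> > 0" unfolding \<eta>_def using C0 epos by simp
      have etaC: "\<eta> * C0 \<le> e" unfolding \<eta>_def using C0 epos by (simp add: field_simps)
      have uc1: "uniformly_continuous_on {t..T} (\<lambda>s. norm (u s))"
        by (rule compact_uniformly_continuous[OF phic compact_Icc])
      obtain d1 where d1: "d1 > 0" and D1': "\<forall>a\<in>{t..T}. \<forall>b\<in>{t..T}. dist b a < d1
          \<longrightarrow> dist (norm (u b)) (norm (u a)) < \<eta>"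
        using uc1 eta unfolding uniformly_continuous_on_def by blast
      note D1 = D1'[rule_format]
      have uc2: "uniformly_continuous_on {t..T} g"
        by (rule compact_uniformly_continuous[OF gc compact_Icc])
      obtain d2 where d2: "d2 > 0" and D2': "\<forall>a\<in>{t..T}. \<forall>b\<in>{t..T}. dist b a < d2
          \<longrightarrow> dist (g b) (g a) < \<eta>"
        using uc2 eta unfolding uniformly_continuous_on_def by blast
      note D2 = D2'[rule_format]
      show "\<exists>\<delta>>0. \<forall>x y. t \<le> x \<longrightarrow> x \<le> y \<longrightarrow> y \<le> T \<longrightarrow> y - x < \<delta> \<longrightarrow>
              F x - F y \<le> Mf y - Mf x + e * (y - x)"
      proof (intro exI[of _ "min d1 d2"] conjI allI impI)
        show "min d1 d2 > 0" using d1 d2 by simp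
        fix x y assume tx: "t \<le> x" and xy: "x \<le> y" and yT: "y \<le> T" and yx: "y - x < min d1 d2"
        have x0: "0 \<le> x" using t tx by simp
        define c where "c = (norm (u x) + norm (u y)) * g x"
        define k where "k s = c\<^sup>2 / (4 * \<epsilon> * w s) - (norm (u y))\<^sup>2 * g' s - \<mu> * ((norm (u s))\<^sup>2 * w s)" for s
        have LE: "F x - F y \<le> integral {x..y} (\<lambda>s. \<epsilon> * ((norm (u' s))\<^sup>2 * w s) + \<mu> * ((norm (u s))\<^sup>2 * w s))
                 + integral {x..y} k"
          unfolding F_def k_def c_def
        proof (rule local_est[OF xy uxy[OF x0 xy] gder[OF x0 xy] g'cont[OF x0] wcont[OF x0] _ ucont'[OF x0]
                  _ e g0[OF x0]])
          show "\<And>s. s \<in> {x..y} \<Longrightarrow> w s > 0" using wpos x0 by (smt (verit) atLeastAtMost_iff)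
          show "(\<lambda>s. (norm (u' s))\<^sup>2 * w s) integrable_on {x..y}"
            using sub[OF f1i x0] unfolding f1_def .
        qed
        have mmeq: "integral {x..y} (\<lambda>s. \<epsilon> * ((norm (u' s))\<^sup>2 * w s) + \<mu> * ((norm (u s))\<^sup>2 * w s))
            = integral {x..y} mm" unfolding mm_def f1_def f2_def by simp
        have comb: "integral {t..x} mm + integral {x..y} mm = integral {t..y} mm"
          using Henstock_Kurzweil_Integration.integral_combine[OF tx xy sub[OF mmi t]] .
        have kle: "integral {x..y} k \<le> e * (y - x)"
        proof -
          have wnz: "\<forall>s\<in>{x..y}. 4 * \<epsilon> * w s \<noteq> 0"
          proof
            fix s assume "s \<in> {x..y}"
            then have "w s \<ge> 1" using wpos x0 by simp
            then show "4 * \<epsilon> * w s \<noteq> 0" using e by simp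
          qed
          have kc1: "continuous_on {x..y} (\<lambda>s. c\<^sup>2 / (4 * \<epsilon> * w s))"
            by (rule continuous_on_divide[OF continuous_on_const continuous_on_mult[OF continuous_on_const wcont[OF x0]] wnz])
          have kc2: "continuous_on {x..y} (\<lambda>s. (norm (u y))\<^sup>2 * g' s)"
            by (rule continuous_on_mult[OF continuous_on_const g'cont[OF x0]])
          have kc3: "continuous_on {x..y} (\<lambda>s. \<mu> * ((norm (u s))\<^sup>2 * w s))"
            using ucont'[OF x0] wcont[OF x0] by (intro continuous_intros)
          have kc: "continuous_on {x..y} k" unfolding k_def
            by (rule continuous_on_diff[OF continuous_on_diff[OF kc1 kc2] kc3])
          have "integral {x..y} k \<le> integral {x..y} (\<lambda>s. e)"
          proof (rule integral_le[OF integrable_continuous_interval[OF kc]])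
            show "(\<lambda>s. e) integrable_on {x..y}" by (rule integrable_const_ivl)
            fix s assume s: "s \<in> {x..y}"
            have sT: "s \<in> {t..T}" and xT: "x \<in> {t..T}" and yT': "y \<in> {t..T}" using s tx xy yT by auto
            have s0: "0 \<le> s" using s x0 by simp
            have ws: "w s \<ge> 1" using wpos[OF s0] .
            have dx1: "dist x s < d1" "dist y s < d1" "dist x s < d2" using s yx by (auto simp: dist_real_def)
            have dxs: "\<bar>norm (u x) - norm (u s)\<bar> < \<eta>" using D1[OF sT xT dx1(1)] by (simp add: dist_real_def)
            have dys: "\<bar>norm (u y) - norm (u s)\<bar> < \<eta>" using D1[OF sT yT' dx1(2)] by (simp add: dist_real_def)
            have dgs: "\<bar>g x - g s\<bar> < \<eta>" using D2[OF sT xT dx1(3)] by (simp add: dist_real_def)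
            have cs: "(g s)\<^sup>2 \<le> \<epsilon> * w s * (\<mu> * w s + g' s)"
              using cond[OF s0] unfolding g_def w_def g'_def .
            define ps where "ps = norm (u s) * g s"
            have P1: "c\<^sup>2 / (4 * \<epsilon> * w s) - (norm (u s))\<^sup>2 * (g s)\<^sup>2 / (\<epsilon> * w s) \<le> \<eta> * (4 * Bd^3 / \<epsilon>)"
            proof -
              have hx: "norm (u x) \<le> Bd" "norm (u y) \<le> Bd" "norm (u s) \<le> Bd"
                using phiB xT yT' sT by auto
              have hg: "0 \<le> g x" "g x \<le> Bd" "0 \<le> g s" "g s \<le> Bd" using gB[OF xT] gB[OF sT] g0 x0 s0 by auto
              have a1: "c/2 - ps \<le> \<eta> * (2 * Bd)"
              proof -
                have "c/2 - ps = (norm (u x) - norm (u s)) * (g x / 2) + (norm (u y) - norm (u s)) * (g x / 2) + norm (u s) * (g x - g s)"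
                  unfolding c_def ps_def by (simp add: algebra_simps)
                also have "\<dots> \<le> \<eta> * (g x / 2) + \<eta> * (g x / 2) + norm (u s) * \<eta>"
                proof (intro add_mono)
                  show "(norm (u x) - norm (u s)) * (g x / 2) \<le> \<eta> * (g x / 2)"
                    using dxs hg by (intro mult_right_mono) auto
                  show "(norm (u y) - norm (u s)) * (g x / 2) \<le> \<eta> * (g x / 2)"
                    using dys hg by (intro mult_right_mono) auto
                  show "norm (u s) * (g x - g s) \<le> norm (u s) * \<eta>"
                    using dgs by (intro mult_left_mono) auto
                qed
                also have "\<dots> = \<eta> * g x + norm (u s) * \<eta>" by simp
                also have "\<dots> \<le> \<eta> * Bd + Bd * \<eta>"
                  using hx hg eta by (intro add_mono mult_left_mono mult_right_mono) auto
                also have "\<dots> = \<eta> * (2 * Bd)" by simp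
                finally show ?thesis .
              qed
              have a2: "c/2 + ps \<le> 2 * Bd^2" "c/2 + ps \<ge> 0"
              proof -
                have b3: "norm (u x) * g x \<le> Bd * Bd" "norm (u y) * g x \<le> Bd * Bd" "ps \<le> Bd * Bd"
                  unfolding ps_def using hx hg by (auto intro!: mult_mono)
                have "c/2 + ps = (norm (u x) * g x + norm (u y) * g x)/2 + ps"
                  unfolding c_def by (simp add: algebra_simps)
                also have "\<dots> \<le> (Bd * Bd + Bd * Bd)/2 + Bd * Bd"
                  using b3 by (intro add_mono divide_right_mono) auto
                also have "\<dots> = 2 * Bd^2" by (simp add: power2_eq_square)
                finally show "c/2 + ps \<le> 2 * Bd^2" .
                show "c/2 + ps \<ge> 0" unfolding c_def ps_def using hg by simp
              qed
              have "c\<^sup>2 / 4 - ps\<^sup>2 = (c/2 - ps) * (c/2 + ps)" by (simp add: power2_eq_square field_simps)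
              also have "\<dots> \<le> (\<eta> * (2 * Bd)) * (c/2 + ps)" using a1 a2 by (intro mult_right_mono) auto
              also have "\<dots> \<le> (\<eta> * (2 * Bd)) * (2 * Bd^2)" using a2 eta Bd1 by (intro mult_left_mono) auto
              finally have num: "c\<^sup>2 / 4 - ps\<^sup>2 \<le> \<eta> * (4 * Bd^3)" by (simp add: power3_eq_cube power2_eq_square algebra_simps)
              have "c\<^sup>2 / (4 * \<epsilon> * w s) - (norm (u s))\<^sup>2 * (g s)\<^sup>2 / (\<epsilon> * w s) = (c\<^sup>2 / 4 - ps\<^sup>2) / (\<epsilon> * w s)"
                unfolding ps_def using e ws by (simp add: field_simps power_mult_distrib)
              also have "\<dots> \<le> \<eta> * (4 * Bd^3) / \<epsilon>"
              proof (cases "c\<^sup>2 / 4 - ps\<^sup>2 \<le> 0")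
                case True
                have "(c\<^sup>2 / 4 - ps\<^sup>2) / (\<epsilon> * w s) \<le> 0"
                  by (rule divide_nonpos_pos) (use True e ws in auto)
                moreover have "0 \<le> \<eta> * (4 * Bd^3) / \<epsilon>" using eta e Bd1 by simp
                ultimately show ?thesis by linarith
              next
                case False
                have "(c\<^sup>2 / 4 - ps\<^sup>2) / (\<epsilon> * w s) \<le> (c\<^sup>2 / 4 - ps\<^sup>2) / \<epsilon>"
                  using False e ws by (intro divide_left_mono) (auto simp: mult_pos_pos)
                also have "\<dots> \<le> \<eta> * (4 * Bd^3) / \<epsilon>" using num e by (simp add: divide_right_mono)
                finally show ?thesis .
              qed
              finally show ?thesis by simp
            qed
            have P2: "((norm (u s))\<^sup>2 - (norm (u y))\<^sup>2) * g' s \<le> \<eta> * (2 * Bd^2)"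
            proof -
              have hx: "norm (u y) \<le> Bd" "norm (u s) \<le> Bd" using phiB yT' sT by auto
              have "((norm (u s))\<^sup>2 - (norm (u y))\<^sup>2) * g' s = (norm (u s) - norm (u y)) * (norm (u s) + norm (u y)) * g' s"
                by (simp add: power2_eq_square algebra_simps)
              also have "\<dots> \<le> \<bar>(norm (u s) - norm (u y)) * (norm (u s) + norm (u y)) * g' s\<bar>" by (rule abs_ge_self)
              also have "\<dots> = \<bar>norm (u s) - norm (u y)\<bar> * (norm (u s) + norm (u y)) * \<bar>g' s\<bar>" by (simp add: abs_mult)
              also have "\<dots> \<le> \<eta> * (2 * Bd) * Bd"
                using dys hx g'B[OF sT] eta by (intro mult_mono) (auto simp: abs_minus_commute)
              finally show ?thesis by (simp add: power2_eq_square algebra_simps)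
            qed
            have "\<mu> * ((norm (u s))\<^sup>2 * w s) \<ge> (norm (u s))\<^sup>2 * (g s)\<^sup>2 / (\<epsilon> * w s) - (norm (u s))\<^sup>2 * g' s"
            proof -
              have W: "\<epsilon> * w s > 0" using e ws by simp
              have "(g s)\<^sup>2 / (\<epsilon> * w s) \<le> \<mu> * w s + g' s" unfolding pos_divide_le_eq[OF W] using cs by (simp add: algebra_simps)
              then have "(norm (u s))\<^sup>2 * ((g s)\<^sup>2 / (\<epsilon> * w s)) \<le> (norm (u s))\<^sup>2 * (\<mu> * w s + g' s)"
                by (intro mult_left_mono) auto
              then show ?thesis by (simp add: algebra_simps)
            qed
            moreover have "((norm (u s))\<^sup>2 - (norm (u y))\<^sup>2) * g' s = (norm (u s))\<^sup>2 * g' s - (norm (u y))\<^sup>2 * g' s"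
              by (simp add: left_diff_distrib)
            ultimately have "k s \<le> (c\<^sup>2 / (4 * \<epsilon> * w s) - (norm (u s))\<^sup>2 * (g s)\<^sup>2 / (\<epsilon> * w s))
                          + ((norm (u s))\<^sup>2 - (norm (u y))\<^sup>2) * g' s"
              unfolding k_def by linarith
            also have "\<dots> \<le> \<eta> * (4 * Bd^3 / \<epsilon>) + \<eta> * (2 * Bd^2)" using P1 P2 by simp
            also have "\<dots> = \<eta> * C0" unfolding C0_def by (simp add: algebra_simps)
            also have "\<dots> \<le> e" using etaC .
            finally show "k s \<le> e" .
          qed
          also have "\<dots> = e * (y - x)" using xy by (simp add: mult.commute)
          finally show ?thesis .
        qed
        show "F x - F y \<le> Mf y - Mf x + e * (y - x)"
          using LE mmeq comb kle unfolding Mf_def by linarith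
      qed
    qed
    then show ?thesis unfolding Mf_def by simp
  qed
  have intT: "integral {t..T} mm \<le> \<epsilon> * A + \<mu> * B" if tT: "t \<le> T" for T
  proof -
    have "integral {t..T} f1 \<le> A" unfolding A_def
      using f1nn sub[OF f1i t] f1i t by (intro integral_subset_le) auto
    moreover have "integral {t..T} f2 \<le> B" unfolding B_def
      using f2nn sub[OF f2i t] f2i t by (intro integral_subset_le) auto
    moreover have "integral {t..T} mm = \<epsilon> * integral {t..T} f1 + \<mu> * integral {t..T} f2"
      unfolding mm_def using sub[OF f1i t] sub[OF f2i t]
      by (simp add: integral_add integrable_on_mult_right integral_mult_right)
    ultimately show ?thesis using e m
      by (metis add_mono less_eq_real_def mult_left_mono)
  qed
  have small: "\<exists>T\<ge>t. f2 T < \<eta>" if eta: "\<eta> > 0" for \<eta>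
  proof (rule ccontr)
    assume "\<not> ?thesis"
    then have big: "\<And>T. T \<ge> t \<Longrightarrow> f2 T \<ge> \<eta>" by (auto simp: not_less)
    obtain n :: nat where n: "B / \<eta> < real n" using reals_Archimedean2 by blast
    have "\<eta> * real n \<le> integral {t..t + real n} f2"
    proof -
      have "integral {t..t + real n} (\<lambda>s. \<eta>) \<le> integral {t..t + real n} f2"
        using big sub[OF f2i t] by (intro integral_le) auto
      then show ?thesis by (simp add: mult.commute)
    qed
    also have "\<dots> \<le> B" unfolding B_def
      using f2nn sub[OF f2i t] f2i t by (intro integral_subset_le) auto
    finally have "\<eta> * real n \<le> B" .
    moreover have "B < real n * \<eta>" using n eta by (simp add: pos_divide_less_eq)
    ultimately show False by (simp add: mult.commute)
  qed
  have "F t \<le> \<epsilon> * A + \<mu> * B + \<eta>" if eta: "\<eta> > 0" for \<eta>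
  proof -
    obtain T where tT: "T \<ge> t" and fT: "f2 T < \<eta>" using small[OF eta] by blast
    have T0: "0 \<le> T" using t tT by simp
    have "F T \<le> f2 T" unfolding F_def f2_def using gw[OF T0] by (intro mult_left_mono) auto
    then show ?thesis using keyT[OF tT] intT[OF tT] fT by simp
  qed
  then have "F t \<le> \<epsilon> * A + \<mu> * B" by (rule field_le_epsilon)
  then show ?thesis unfolding F_def g_def A_def B_def f1_def f2_def w_def .
qed

theorem lemma6p4:
  fixes d \<beta> :: real and u u' :: "real \<Rightarrow> complex"
  assumes params: "(1 < d \<and> d \<le> 2 \<and> 0 < \<beta> \<and> \<beta> \<le> (d - 1) / 2)
                 \<or> (d > 2 \<and> (d - 2) / 2 \<le> \<beta> \<and> \<beta> \<le> (d - 1) / 2)"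
    and H1loc: "\<And>t. 0 \<le> t \<Longrightarrow> (u' has_integral (u t - u 0)) {0..t}"
    and du: "(\<lambda>t. (norm (u' t))\<^sup>2 * (1 + t) powr (d - 1)) integrable_on {0..}"
    and uu: "(\<lambda>t. (norm (u t))\<^sup>2 * (1 + t) powr (d - 1)) integrable_on {0..}"
  shows "\<forall>t\<ge>0. (norm (u t))\<^sup>2 * (1 + t) powr (2 * \<beta>)
           \<le> (let \<theta> = (d - 2 * \<beta>) / 2;
                   K = powr0 (2 / (d - 2 * \<beta>)) (d - 2 * \<beta>)
                       * powr0 ((d - 1 - 2 * \<beta>) / (2 * \<beta>)) (d - 1 - 2 * \<beta>)
               in K * powr0 (integral {0..} (\<lambda>t. (norm (u' t))\<^sup>2 * (1 + t) powr (d - 1))) \<theta>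
                    * powr0 (integral {0..} (\<lambda>t. (norm (u t))\<^sup>2 * (1 + t) powr (d - 1))) (1 - \<theta>))"
proof (intro allI impI)
  fix t :: real assume t: "0 \<le> t"
  have bpos: "\<beta> > 0" and a1: "1 \<le> d - 2 * \<beta>" and a2: "d - 2 * \<beta> \<le> 2" and bd: "2 * \<beta> \<le> d - 1"
    using params by auto
  define a where "a = d - 2 * \<beta>"
  define K where "K = powr0 (2/a) a * powr0 ((a-1)/(2*\<beta>)) (a-1)"
  define A where "A = integral {0..} (\<lambda>t. (norm (u' t))\<^sup>2 * (1 + t) powr (d - 1))"
  define B where "B = integral {0..} (\<lambda>t. (norm (u t))\<^sup>2 * (1 + t) powr (d - 1))"
  define F where "F = (norm (u t))\<^sup>2 * (1 + t) powr (2 * \<beta>)"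
  have a1': "1 \<le> a" and a2': "a \<le> 2" using a1 a2 unfolding a_def by auto
  have Kpos: "K > 0" unfolding K_def powr0_def using a1' bpos by auto
  have A0: "A \<ge> 0" unfolding A_def using du by (intro integral_nonneg) auto
  have B0: "B \<ge> 0" unfolding B_def using uu by (intro integral_nonneg) auto
  have F0: "F \<ge> 0" unfolding F_def by simp
  have P: "F \<le> (a/2) * K * \<rho> powr (a/2 - 1) * A + (1 - a/2) * K * \<rho> powr (a/2) * B" if rho: "\<rho> > 0" for \<rho>
    unfolding F_def A_def B_def
  proof (rule main_bound[OF bpos bd H1loc du uu _ _ _ t])
    show "(a/2) * K * \<rho> powr (a/2 - 1) > 0" using a1' Kpos rho by simp
    show "(1 - a/2) * K * \<rho> powr (a/2) \<ge> 0" using a2' Kpos rho by simp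
    fix s :: real assume s: "0 \<le> s"
    define x where "x = 1 + s"
    have x: "x > 0" unfolding x_def using s by simp
    define z where "z = \<rho> powr (-1/2) * x powr (-1)"
    have zpos: "z > 0" unfolding z_def using x rho by simp
    have zq: "z powr q = \<rho> powr (-q/2) * x powr (-q)" for q
    proof -
      have "z powr q = (\<rho> powr (-1/2)) powr q * (x powr (-1)) powr q"
        unfolding z_def by (rule powr_mult)
      also have "\<dots> = \<rho> powr (-q/2) * x powr (-q)" unfolding powr_powr by simp
      finally show ?thesis .
    qed
    have ci: "z powr (2*(a-1)) \<le> (a/2) * K * ((1 - a/2) * K + 2*\<beta> * z powr a)"
      using const_ineq[OF bpos a1' a2' zpos] unfolding K_def .
    define M where "M = \<rho> powr (a-1) * x powr (2*(d-1))"
    have Mpos: "M > 0" unfolding M_def using x rho by simp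
    have le: "z powr (2*(a-1)) * M \<le> (a/2) * K * ((1 - a/2) * K + 2*\<beta> * z powr a) * M"
      using ci Mpos by (intro mult_right_mono) auto
    have eqL: "z powr (2*(a-1)) * M = (x powr (2 * \<beta>))\<^sup>2"
    proof -
      have "z powr (2*(a-1)) * M = (\<rho> powr (-(2*(a-1))/2) * \<rho> powr (a-1)) * (x powr (-(2*(a-1))) * x powr (2*(d-1)))"
        unfolding zq M_def by (simp add: field_simps)
      also have "\<dots> = \<rho> powr (-(2*(a-1))/2 + (a-1)) * x powr (-(2*(a-1)) + 2*(d-1))"
        by (simp only: powr_add)
      also have "\<dots> = x powr (2*\<beta> + 2*\<beta>)"
      proof -
        have h1: "-(2*(a-1))/2 + (a-1) = 0" by (simp add: field_simps)
        have h2: "-(2*(a-1)) + 2*(d-1) = 2*\<beta> + 2*\<beta>" unfolding a_def by simp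
        show ?thesis unfolding h1 h2 using rho by simp
      qed
      also have "\<dots> = (x powr (2 * \<beta>))\<^sup>2" by (simp only: powr_add power2_eq_square)
      finally show ?thesis .
    qed
    have eqR: "(a/2) * K * ((1 - a/2) * K + 2*\<beta> * z powr a) * M
        = (a/2) * K * \<rho> powr (a/2 - 1) * x powr (d - 1) *
          ((1 - a/2) * K * \<rho> powr (a/2) * x powr (d - 1) + 2 * \<beta> * x powr (2 * \<beta> - 1))"
    proof -
      have e1: "\<rho> powr (a/2 - 1) * \<rho> powr (a/2) = \<rho> powr (a-1)" by (simp add: powr_add[symmetric])
      have e2: "x powr (d - 1) * x powr (d - 1) = x powr (2*(d-1))" by (simp add: powr_add[symmetric])
      have e3: "\<rho> powr (-a/2) * \<rho> powr (a-1) = \<rho> powr (a/2 - 1)" by (simp add: powr_add[symmetric])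
      have e4: "x powr (-a) * x powr (2*(d-1)) = x powr (d - 1) * x powr (2 * \<beta> - 1)"
        unfolding a_def by (simp add: powr_add[symmetric] algebra_simps)
      have "(a/2) * K * ((1 - a/2) * K + 2*\<beta> * z powr a) * M
         = (a/2) * K * (1 - a/2) * K * M + (a/2) * K * 2 * \<beta> * (\<rho> powr (-a/2) * \<rho> powr (a-1)) * (x powr (-a) * x powr (2*(d-1)))"
        unfolding zq M_def by (simp add: field_simps)
      also have "\<dots> = (a/2) * K * (1 - a/2) * K * (\<rho> powr (a/2 - 1) * \<rho> powr (a/2)) * (x powr (d - 1) * x powr (d - 1))
          + (a/2) * K * 2 * \<beta> * \<rho> powr (a/2 - 1) * (x powr (d - 1) * x powr (2 * \<beta> - 1))"
        unfolding e1 e2 e3 e4 M_def by simp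
      also have "\<dots> = (a/2) * K * \<rho> powr (a/2 - 1) * x powr (d - 1) *
          ((1 - a/2) * K * \<rho> powr (a/2) * x powr (d - 1) + 2 * \<beta> * x powr (2 * \<beta> - 1))"
        by (simp add: field_simps)
      finally show ?thesis .
    qed
    from le have "(x powr (2 * \<beta>))\<^sup>2 \<le> (a/2) * K * \<rho> powr (a/2 - 1) * x powr (d - 1) *
          ((1 - a/2) * K * \<rho> powr (a/2) * x powr (d - 1) + 2 * \<beta> * x powr (2 * \<beta> - 1))"
      by (simp only: eqL eqR)
    then show "((1 + s) powr (2 * \<beta>))\<^sup>2 \<le> (a/2) * K * \<rho> powr (a/2 - 1) * (1 + s) powr (d - 1) *
          ((1 - a/2) * K * \<rho> powr (a/2) * (1 + s) powr (d - 1) + 2 * \<beta> * (1 + s) powr (2 * \<beta> - 1))"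
      by (simp only: x_def)
  qed
  have goal: "F \<le> K * powr0 A (a/2) * powr0 B (1 - a/2)"
  proof (cases "A = 0")
    case True
    have "F \<le> 0"
    proof (rule ccontr)
      assume "\<not> F \<le> 0"
      then have Fp: "F > 0" by simp
      define c where "c = (1 - a/2) * K * B"
      have c0: "c \<ge> 0" unfolding c_def using a2' Kpos B0 by simp
      show False
      proof (cases "c = 0")
        case True
        have "F \<le> c" using P[of 1] \<open>A = 0\<close> unfolding c_def by simp
        then show False using True Fp by simp
      next
        case False
        then have cp: "c > 0" using c0 by simp
        define \<rho> where "\<rho> = (F / (2*c)) powr (2/a)"
        have rp: "\<rho> > 0" unfolding \<rho>_def using Fp cp by simp
        have "\<rho> powr (a/2) = F / (2*c)" unfolding \<rho>_def using Fp cp a1' by (simp add: powr_powr)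
        then have "F \<le> c * (F / (2*c))" using P[OF rp] \<open>A = 0\<close> unfolding c_def by (simp add: algebra_simps)
        then show False using cp Fp by simp
      qed
    qed
    then show ?thesis using True a1' unfolding powr0_def by simp
  next
    case False
    then have Ap: "A > 0" using A0 by simp
    show ?thesis
    proof (cases "B = 0")
      case False
      then have Bp: "B > 0" using B0 by simp
      define \<rho> where "\<rho> = A / B"
      have rp: "\<rho> > 0" unfolding \<rho>_def using Ap Bp by simp
      have h1: "\<rho> powr (a/2 - 1) * A = A powr (a/2) * B powr (1 - a/2)"
      proof -
        have "\<rho> powr (a/2 - 1) * A = (A powr (a/2 - 1) * A powr 1) / B powr (a/2 - 1)"
          unfolding \<rho>_def using Ap Bp by (simp add: powr_divide)
        also have "A powr (a/2 - 1) * A powr 1 = A powr (a/2)" unfolding powr_add[symmetric] by simp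
        also have "B powr (a/2 - 1) = B powr (a/2) / B powr 1" by (simp add: powr_diff)
        also have "A powr (a/2) / (B powr (a/2) / B powr 1) = A powr (a/2) * (B powr 1 / B powr (a/2))"
          by simp
        also have "B powr 1 / B powr (a/2) = B powr (1 - a/2)" by (simp add: powr_diff)
        finally show ?thesis .
      qed
      have h2: "\<rho> powr (a/2) * B = A powr (a/2) * B powr (1 - a/2)"
      proof -
        have "\<rho> powr (a/2) * B = A powr (a/2) * (B powr 1 / B powr (a/2))"
          unfolding \<rho>_def using Ap Bp by (simp add: powr_divide)
        also have "B powr 1 / B powr (a/2) = B powr (1 - a/2)" by (simp add: powr_diff)
        finally show ?thesis .
      qed
      have "F \<le> (a/2) * K * (\<rho> powr (a/2 - 1) * A) + (1 - a/2) * K * (\<rho> powr (a/2) * B)"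
        using P[OF rp] by (simp add: algebra_simps)
      also have "\<dots> = K * A powr (a/2) * B powr (1 - a/2)" unfolding h1 h2 by (simp add: algebra_simps)
      also have "\<dots> = K * powr0 A (a/2) * powr0 B (1 - a/2)"
        unfolding powr0_def using a1' Bp by auto
      finally show ?thesis .
    next
      case True
      show ?thesis
      proof (cases "a = 2")
        case True
        then show ?thesis using P[of 1] \<open>B = 0\<close> Ap unfolding powr0_def by simp
      next
        case False
        then have a2s: "a < 2" using a2' by simp
        have "F \<le> 0"
        proof (rule ccontr)
          assume "\<not> F \<le> 0"
          then have Fp: "F > 0" by simp
          define c where "c = (a/2) * K * A"
          have cp: "c > 0" unfolding c_def using a1' Kpos Ap by simp
          define \<rho> where "\<rho> = (F / (2*c)) powr (1 / (a/2 - 1))"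
          have rp: "\<rho> > 0" unfolding \<rho>_def using Fp cp by simp
          have eq: "\<rho> powr (a/2 - 1) = F / (2*c)" unfolding \<rho>_def using Fp cp a2s by (simp add: powr_powr)
          have "F \<le> c * \<rho> powr (a/2 - 1)" using P[OF rp] \<open>B = 0\<close> unfolding c_def by (simp add: mult_ac)
          also have "\<dots> = F / 2" unfolding eq using cp by simp
          finally show False using Fp by simp
        qed
        then show ?thesis using \<open>B = 0\<close> a2s unfolding powr0_def by simp
      qed
    qed
  qed
  have e: "(d - 2 * \<beta>) / 2 = a / 2" "d - 2 * \<beta> = a" "d - 1 - 2 * \<beta> = a - 1" unfolding a_def by simp_all
  show "(norm (u t))\<^sup>2 * (1 + t) powr (2 * \<beta>)
           \<le> (let \<theta> = (d - 2 * \<beta>) / 2;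
                   K = powr0 (2 / (d - 2 * \<beta>)) (d - 2 * \<beta>)
                       * powr0 ((d - 1 - 2 * \<beta>) / (2 * \<beta>)) (d - 1 - 2 * \<beta>)
               in K * powr0 (integral {0..} (\<lambda>t. (norm (u' t))\<^sup>2 * (1 + t) powr (d - 1))) \<theta>
                    * powr0 (integral {0..} (\<lambda>t. (norm (u t))\<^sup>2 * (1 + t) powr (d - 1))) (1 - \<theta>))"
    unfolding Let_def e(1) e(3) e(2) using goal unfolding F_def A_def B_def K_def .
qed

end
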